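(* In the 3-body problem in ${\bf H}^2$ with masses $m_1,m_2,m_3>0$, let ${\bf q}_i(t)=(\rho_i\cos(\omega t+\alpha_i),\rho_i\sin(\omega t+\alpha_i), z_i)$, $i=1,2,3$, with constants $\omega\ne0$, $\alpha_i$, $\rho_i\ge0$, $z_i=(\rho_i^2+1)^{1/2}$, be an elliptic relative equilibrium in which the three bodies form an equilateral triangle (all mutual hyperbolic distances equal) at all times. Then $z_1=z_2=z_3$, i.e. the bodies move on the same circle whose plane is orthogonal to the rotation axis, and $m_1=m_2=m_3$.
   Context: The $n$-body problem in ${\bf H}^2$ (Weierstrass model): with the Lorentz inner product ${\bf a}\boxdot{\bf b}=a_xb_x+a_yb_y-a_zb_z$ on $\mathbb R^3$, ${\bf H}^2=\{(x,y,z): x^2+y^2-z^2=-1,\ z>0\}$. Bodies of masses $m_1,\dots,m_n>0$ have positions ${\bf q}_i=(x_i,y_i,z_i)\in{\bf H}^2$ and satisfy $$\ddot{\bf q}_i=\sum_{j\ne i}\frac{m_j[{\bf q}_j+({\bf q}_i\boxdot{\bf q}_j){\bf q}_i]}{[({\bf q}_i\boxdot{\bf q}_j)^2-1]^{3/2}}+(\dot{\bf q}_i\boxdot\dot{\bf q}_i){\bf q}_i,\qquad {\bf q}_i\boxdot{\bf q}_i=-1,\ \ {\bf q}_i\boxdot\dot{\bf q}_i=0,$$ $i=1,\dots,n$, defined only for collisionless configurations. The angular momentum $\sum_i m_i{\bf q}_i\boxtimes\dot{\bf q}_i$, where ${\bf a}\boxtimes{\bf b}=(a_yb_z-a_zb_y,\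 a_zb_x-a_xb_z,\ a_yb_x-a_xb_y)$, is a first integral. The hyperbolic distance is $d({\bf a},{\bf b})=\cosh^{-1}(-{\bf a}\boxdot{\bf b})$. An elliptic relative equilibrium in ${\bf H}^2$ is a solution with $x_i=\rho_i\cos(\omega t+\alpha_i)$, $y_i=\rho_i\sin(\omega t+\alpha_i)$, $z_i=(\rho_i^2+1)^{1/2}$, constants $\omega,\alpha_i,\rho_i$. *)

theory Defs
  imports "HOL-Analysis.Analysis"
begin

text \<open>Points of R^3 are vectors of type real^3; components 1,2,3 are x,y,z.\<close>

definition lorentz :: "real^3 \<Rightarrow> real^3 \<Rightarrow> real" where
  "lorentz a b = a$1 * b$1 + a$2 * b$2 - a$3 * b$3"

definition H2 :: "(real^3) set" where
  "H2 = {p. p$1^2 + p$2^2 - p$3^2 = -1 \<and> p$3 > 0}"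

definition hdist :: "real^3 \<Rightarrow> real^3 \<Rightarrow> real" where
  "hdist a b = arcosh (- lorentz a b)"

definition accel :: "nat \<Rightarrow> (nat \<Rightarrow> real) \<Rightarrow> (nat \<Rightarrow> real^3) \<Rightarrow> real^3 \<Rightarrow> nat \<Rightarrow> real^3" where
  "accel n m p w i =
     (\<Sum>j\<in>{..<n} - {i}.
        (m j / ((lorentz (p i) (p j))^2 - 1) powr (3/2)) *\<^sub>R (p j + lorentz (p i) (p j) *\<^sub>R p i))
     + lorentz w w *\<^sub>R p i"

definition is_solution :: "nat \<Rightarrow> (nat \<Rightarrow> real) \<Rightarrow> (nat \<Rightarrow> real \<Rightarrow> real^3) \<Rightarrow> bool" where
  "is_solution n m q \<longleftrightarrow>
     (\<exists>v :: nat \<Rightarrow> real \<Rightarrow> real^3. \<forall>t.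
        (\<forall>i<n. \<forall>j<n. i \<noteq> j \<longrightarrow> q i t \<noteq> q j t) \<and>
        (\<forall>i<n. q i t \<in> H2 \<and> lorentz (q i t) (q i t) = -1 \<and> lorentz (q i t) (v i t) = 0 \<and>
            (q i has_vector_derivative v i t) (at t) \<and>
            (v i has_vector_derivative accel n m (\<lambda>k. q k t) (v i t) i) (at t)))"

definition elliptic_RE :: "nat \<Rightarrow> (nat \<Rightarrow> real \<Rightarrow> real^3) \<Rightarrow> real \<Rightarrow> (nat \<Rightarrow> real) \<Rightarrow> (nat \<Rightarrow> real) \<Rightarrow> bool" where
  "elliptic_RE n q \<omega> \<alpha> \<rho> \<longleftrightarrow>
     (\<forall>i<n. \<forall>t. q i t = vector [\<rho> i * cos (\<omega> * t + \<alpha> i), \<rho> i * sin (\<omega> * t + \<alpha> i), sqrt ((\<rho> i)^2 + 1)])"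

end

theory Submission
  imports Defs
begin

lemma comp_deriv:
  fixes f :: "real \<Rightarrow> real^'n"
  assumes "(f has_vector_derivative f') (at t)"
  shows "((\<lambda>s. f s $ k) has_real_derivative f' $ k) (at t)"
proof -
  have "((\<lambda>s. f s $ k) has_vector_derivative f' $ k) (at t)"
    using bounded_linear.has_vector_derivative[OF bounded_linear_vec_nth assms] by simp
  then show ?thesis by (simp add: has_real_derivative_iff_has_vector_derivative)
qed

lemma deriv_cos: "((\<lambda>s. r * cos(w * s + a)) has_real_derivative (-(r*w * sin(w*t+a)))) (at t)"
  by (auto intro!: derivative_eq_intros)
lemma deriv_sin: "((\<lambda>s. r * sin(w * s + a)) has_real_derivative (r*w * cos(w*t+a))) (at t)"
  by (auto intro!: derivative_eq_intros)

lemma accel3: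
  assumes "i<3" "j<3" "k<3" "i\<noteq>j" "i\<noteq>k" "j\<noteq>k"
  shows "accel 3 m P w i =
    (m j / ((lorentz (P i) (P j))^2 - 1) powr (3/2)) *\<^sub>R (P j + lorentz (P i) (P j) *\<^sub>R P i)
  + (m k / ((lorentz (P i) (P k))^2 - 1) powr (3/2)) *\<^sub>R (P k + lorentz (P i) (P k) *\<^sub>R P i)
  + lorentz w w *\<^sub>R P i"
proof -
  have "{..<3} - {i} = {j,k}" using assms by auto
  thus ?thesis unfolding accel_def using assms(6) by simp
qed

lemma gram0:
  fixes N l0 l1 l2 z0 z1 z2 :: real
  shows "(N*l0*l0 - z0*z0)*(N*l1*l1 - z1*z1)*(N*l2*l2-z2*z2) + 2*(N*l0*l1-z0*z1)*(N*l1*l2-z1*z2)*(N*l0*l2-z0*z2)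
   - (N*l0*l0-z0*z0)*(N*l1*l2-z1*z2)^2 - (N*l1*l1-z1*z1)*(N*l0*l2-z0*z2)^2 - (N*l2*l2-z2*z2)*(N*l0*l1-z0*z1)^2 = 0"
  by (simp add: algebra_simps power2_eq_square)

lemma less3: "(i::nat) < 3 \<Longrightarrow> i = 0 \<or> i = 1 \<or> i = 2" by auto

lemma collinear_false:
  fixes a b c :: real and l x y z :: "nat \<Rightarrow> real"
  assumes xl: "\<And>i. i<3 \<Longrightarrow> x i = l i * a" and yl: "\<And>i. i<3 \<Longrightarrow> y i = l i * b"
    and zsq: "\<And>i. i<3 \<Longrightarrow> z i ^2 = x i^2 + y i^2 + 1"
    and c01: "c = x 0*x 1 + y 0*y 1 - z 0 * z 1"
    and c12: "c = x 1*x 2 + y 1*y 2 - z 1 * z 2"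
    and c02: "c = x 0*x 2 + y 0*y 2 - z 0 * z 2"
    and "c < -1"
  shows False
proof -
  define N where "N = a^2 + b^2"
  have d: "N*l i*l i - z i*z i = -1" if "i<3" for i
    using zsq[OF that] xl[OF that] yl[OF that] by (simp add: N_def power2_eq_square algebra_simps)
  have d0: "N*l 0*l 0 - z 0*z 0 = -1" by (rule d) simp
  have d1: "N*l 1*l 1 - z 1*z 1 = -1" by (rule d) simp
  have d2: "N*l 2*l 2 - z 2*z 2 = -1" by (rule d) simp
  have e01: "N*l 0*l 1 - z 0*z 1 = c" using c01 xl[of 0] xl[of 1] yl[of 0] yl[of 1] by (simp add: N_def power2_eq_square algebra_simps)
  have e12: "N*l 1*l 2 - z 1*z 2 = c" using c12 xl[of 2] xl[of 1] yl[of 2] yl[of 1] by (simp add: N_def power2_eq_square algebra_simps)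
  have e02: "N*l 0*l 2 - z 0*z 2 = c" using c02 xl[of 0] xl[of 2] yl[of 0] yl[of 2] by (simp add: N_def power2_eq_square algebra_simps)
  have "(-1)*(-1)*(-1) + 2*c*c*c - (-1)*c^2 - (-1)*c^2 - (-1)*c^2 = (0::real)"
    using gram0[of N "l 0" "z 0" "l 1" "z 1" "l 2" "z 2"] unfolding d0 d1 d2 e01 e12 e02 .
  hence "(c+1)^2*(2*c-1) = 0" by (simp add: algebra_simps power2_eq_square power3_eq_cube)
  moreover have "(c+1)^2 > 0" "2*c-1 < 0" using assms(7) by auto
  ultimately show False by (metis mult_pos_neg not_less_iff_gr_or_eq)
qed

lemma alg:
  fixes x y z K :: "nat \<Rightarrow> real" and c W :: real
  assumes zpos: "\<And>i. i<3 \<Longrightarrow> z i > 0" and zsq: "\<And>i. i<3 \<Longrightarrow> z i^2 = x i^2 + y i^2 + 1"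
    and c01: "c = x 0*x 1 + y 0*y 1 - z 0 * z 1"
    and c12: "c = x 1*x 2 + y 1*y 2 - z 1 * z 2"
    and c02: "c = x 0*x 2 + y 0*y 2 - z 0 * z 2"
    and cneg: "c < -1" and Kpos: "\<And>i. i<3 \<Longrightarrow> K i > 0" and Wpos: "W > 0"
    and E0x: "K 1*(x 1 + c*x 0) + K 2*(x 2 + c*x 0) + W*(x 0^2+y 0^2)*x 0 = - W*x 0"
    and E0y: "K 1*(y 1 + c*y 0) + K 2*(y 2 + c*y 0) + W*(x 0^2+y 0^2)*y 0 = - W*y 0"
    and E0z: "K 1*(z 1 + c*z 0) + K 2*(z 2 + c*z 0) + W*(x 0^2+y 0^2)*z 0 = 0"
    and E1x: "K 0*(x 0 + c*x 1) + K 2*(x 2 + c*x 1) + W*(x 1^2+y 1^2)*x 1 = - W*x 1"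
    and E1y: "K 0*(y 0 + c*y 1) + K 2*(y 2 + c*y 1) + W*(x 1^2+y 1^2)*y 1 = - W*y 1"
    and E1z: "K 0*(z 0 + c*z 1) + K 2*(z 2 + c*z 1) + W*(x 1^2+y 1^2)*z 1 = 0"
    and E2x: "K 0*(x 0 + c*x 2) + K 1*(x 1 + c*x 2) + W*(x 2^2+y 2^2)*x 2 = - W*x 2"
    and E2y: "K 0*(y 0 + c*y 2) + K 1*(y 1 + c*y 2) + W*(x 2^2+y 2^2)*y 2 = - W*y 2"
    and E2z: "K 0*(z 0 + c*z 2) + K 1*(z 1 + c*z 2) + W*(x 2^2+y 2^2)*z 2 = 0"
  shows "z 0 = z 1 \<and> z 1 = z 2 \<and> K 0 = K 1 \<and> K 1 = K 2"
proof -
  define Sx where "Sx = K 0*x 0 + K 1*x 1 + K 2*x 2"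
  define Sy where "Sy = K 0*y 0 + K 1*y 1 + K 2*y 2"
  define Sz where "Sz = K 0*z 0 + K 1*z 1 + K 2*z 2"
  define b where "b i = K i - c*(K 0 + K 1 + K 2 - K i) - W*(x i^2 + y i^2)" for i
  have "Sx - x 0*(b 0 - W) = (K 1*(x 1 + c*x 0) + K 2*(x 2 + c*x 0) + W*(x 0^2+y 0^2)*x 0) - (- W*x 0)"
    unfolding Sx_def b_def by algebra
  hence Sx0: "Sx = x 0*(b 0 - W)" using E0x by simp
  have "Sx - x 1*(b 1 - W) = (K 0*(x 0 + c*x 1) + K 2*(x 2 + c*x 1) + W*(x 1^2+y 1^2)*x 1) - (- W*x 1)"
    unfolding Sx_def b_def by algebra
  hence Sx1: "Sx = x 1*(b 1 - W)" using E1x by simp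
  have "Sx - x 2*(b 2 - W) = (K 0*(x 0 + c*x 2) + K 1*(x 1 + c*x 2) + W*(x 2^2+y 2^2)*x 2) - (- W*x 2)"
    unfolding Sx_def b_def by algebra
  hence Sx2: "Sx = x 2*(b 2 - W)" using E2x by simp
  have "Sy - y 0*(b 0 - W) = (K 1*(y 1 + c*y 0) + K 2*(y 2 + c*y 0) + W*(x 0^2+y 0^2)*y 0) - (- W*y 0)"
    unfolding Sy_def b_def by algebra
  hence Sy0: "Sy = y 0*(b 0 - W)" using E0y by simp
  have "Sy - y 1*(b 1 - W) = (K 0*(y 0 + c*y 1) + K 2*(y 2 + c*y 1) + W*(x 1^2+y 1^2)*y 1) - (- W*y 1)"
    unfolding Sy_def b_def by algebra
  hence Sy1: "Sy = y 1*(b 1 - W)" using E1y by simp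
  have "Sy - y 2*(b 2 - W) = (K 0*(y 0 + c*y 2) + K 1*(y 1 + c*y 2) + W*(x 2^2+y 2^2)*y 2) - (- W*y 2)"
    unfolding Sy_def b_def by algebra
  hence Sy2: "Sy = y 2*(b 2 - W)" using E2y by simp
  have "Sz - z 0*b 0 = K 1*(z 1 + c*z 0) + K 2*(z 2 + c*z 0) + W*(x 0^2+y 0^2)*z 0"
    unfolding Sz_def b_def by algebra
  hence Sz0: "Sz = z 0*b 0" using E0z by simp
  have "Sz - z 1*b 1 = K 0*(z 0 + c*z 1) + K 2*(z 2 + c*z 1) + W*(x 1^2+y 1^2)*z 1"
    unfolding Sz_def b_def by algebra
  hence Sz1: "Sz = z 1*b 1" using E1z by simp
  have "Sz - z 2*b 2 = K 0*(z 0 + c*z 2) + K 1*(z 1 + c*z 2) + W*(x 2^2+y 2^2)*z 2"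
    unfolding Sz_def b_def by algebra
  hence Sz2: "Sz = z 2*b 2" using E2z by simp
  show ?thesis
  proof (cases "Sx \<noteq> 0 \<or> Sy \<noteq> 0")
    case True
    define l where "l i = 1 / (b i - W)" for i
    have bW0: "b 0 \<noteq> W" using True Sx0 Sy0 by auto
    have bW1: "b 1 \<noteq> W" using True Sx1 Sy1 by auto
    have bW2: "b 2 \<noteq> W" using True Sx2 Sy2 by auto
    have "x 0 = l 0 * Sx" "x 1 = l 1 * Sx" "x 2 = l 2 * Sx"
      using Sx0 Sx1 Sx2 bW0 bW1 bW2 by (simp_all add: l_def field_simps)
    hence xl: "x i = l i * Sx" if "i<3" for i using less3[OF that] by auto
    have "y 0 = l 0 * Sy" "y 1 = l 1 * Sy" "y 2 = l 2 * Sy"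
      using Sy0 Sy1 Sy2 bW0 bW1 bW2 by (simp_all add: l_def field_simps)
    hence yl: "y i = l i * Sy" if "i<3" for i using less3[OF that] by auto
    show ?thesis using collinear_false[OF xl yl zsq c01 c12 c02 cneg] by blast
  next
    case False
    hence S0: "Sx = 0" "Sy = 0" by auto
    show ?thesis
    proof (cases "\<forall>i<3. x i \<noteq> 0 \<or> y i \<noteq> 0")
      case True
      have bW: "b i = W" if "i<3" for i
        using True[rule_format, OF that] less3[OF that] S0 Sx0 Sx1 Sx2 Sy0 Sy1 Sy2 by auto
      have zz: "z i = Sz / W" if "i<3" for i
        using less3[OF that] bW[of 0] bW[of 1] bW[of 2] Sz0 Sz1 Sz2 Wpos by auto
      define Z where "Z = Sz / W"
      have z0: "z 0 = Z" "z 1 = Z" "z 2 = Z" using zz[of 0] zz[of 1] zz[of 2] by (auto simp: Z_def)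
      have r: "x i^2 + y i^2 = Z^2 - 1" if "i<3" for i
        using zsq[OF that] zz[OF that] unfolding Z_def by simp
      have d01: "x 0*x 1 + y 0*y 1 = c + Z^2" using c01 z0 by (simp add: power2_eq_square)
      have d12: "x 1*x 2 + y 1*y 2 = c + Z^2" using c12 z0 by (simp add: power2_eq_square)
      have d02: "x 0*x 2 + y 0*y 2 = c + Z^2" using c02 z0 by (simp add: power2_eq_square)
      have "x 0*Sx + y 0*Sy = K 0*(x 0^2+y 0^2) + K 1*(x 0*x 1 + y 0*y 1) + K 2*(x 0*x 2 + y 0*y 2)"
        unfolding Sx_def Sy_def by algebra
      hence F0: "K 0*(Z^2-1) + K 1*(c+Z^2) + K 2*(c+Z^2) = 0" using S0 r[of 0] d01 d02 by simp
      have "x 1*Sx + y 1*Sy = K 1*(x 1^2+y 1^2) + K 0*(x 0*x 1 + y 0*y 1) + K 2*(x 1*x 2 + y 1*y 2)"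
        unfolding Sx_def Sy_def by algebra
      hence F1: "K 1*(Z^2-1) + K 0*(c+Z^2) + K 2*(c+Z^2) = 0" using S0 r[of 1] d01 d12 by simp
      have "x 2*Sx + y 2*Sy = K 2*(x 2^2+y 2^2) + K 0*(x 0*x 2 + y 0*y 2) + K 1*(x 1*x 2 + y 1*y 2)"
        unfolding Sx_def Sy_def by algebra
      hence F2: "K 2*(Z^2-1) + K 0*(c+Z^2) + K 1*(c+Z^2) = 0" using S0 r[of 2] d02 d12 by simp
      have "(K 0 - K 1)*(-1-c) = 0" using F0 F1 by (simp add: algebra_simps)
      hence k01: "K 0 = K 1" using cneg by simp
      have "(K 1 - K 2)*(-1-c) = 0" using F1 F2 by (simp add: algebra_simps)
      hence k12: "K 1 = K 2" using cneg by simp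
      show ?thesis using z0 k01 k12 by simp
    next
      case False
      then obtain i where i: "i<3" "x i = 0" "y i = 0" by auto
      have K0: "K 0 \<noteq> 0" "K 1 \<noteq> 0" "K 2 \<noteq> 0" using Kpos[of 0] Kpos[of 1] Kpos[of 2] by auto
      show ?thesis
      proof -
        consider "i = 0" | "i = 1" | "i = 2" using less3[OF i(1)] by auto
        then show ?thesis
        proof cases
          case 1
          define l where "l j = (if j = 0 then 0 else if j = 1 then 1 else - K 1 / K 2)" for j :: nat
          have xl: "x j = l j * x 1" if "j<3" for j
            using less3[OF that] i 1 S0 K0 unfolding l_def Sx_def by (auto simp: field_simps)
          have yl: "y j = l j * y 1" if "j<3" for j
            using less3[OF that] i 1 S0 K0 unfolding l_def Sy_def by (auto simp: field_simps)
          show ?thesis using collinear_false[OF xl yl zsq c01 c12 c02 cneg] by blast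
        next
          case 2
          define l where "l j = (if j = 0 then 1 else if j = 1 then 0 else - K 0 / K 2)" for j :: nat
          have xl: "x j = l j * x 0" if "j<3" for j
            using less3[OF that] i 2 S0 K0 unfolding l_def Sx_def by (auto simp: field_simps)
          have yl: "y j = l j * y 0" if "j<3" for j
            using less3[OF that] i 2 S0 K0 unfolding l_def Sy_def by (auto simp: field_simps)
          show ?thesis using collinear_false[OF xl yl zsq c01 c12 c02 cneg] by blast
        next
          case 3
          define l where "l j = (if j = 0 then 1 else if j = 1 then - K 0 / K 1 else 0)" for j :: nat
          have xl: "x j = l j * x 0" if "j<3" for j
            using less3[OF that] i 3 S0 K0 unfolding l_def Sx_def by (auto simp: field_simps)
          have yl: "y j = l j * y 0" if "j<3" for j
            using less3[OF that] i 3 S0 K0 unfolding l_def Sy_def by (auto simp: field_simps)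
          show ?thesis using collinear_false[OF xl yl zsq c01 c12 c02 cneg] by blast
        qed
      qed
    qed
  qed
qed

lemma rev_cs:
  fixes x1 y1 z1 x2 y2 z2 :: real
  assumes "z1 > 0" "z2 > 0" "z1^2 = x1^2+y1^2+1" "z2^2 = x2^2+y2^2+1"
  shows "z1*z2 - x1*x2 - y1*y2 \<ge> 1"
    and "z1*z2 - x1*x2 - y1*y2 = 1 \<Longrightarrow> x1 = x2 \<and> y1 = y2 \<and> z1 = z2"
proof -
  define p where "p = x1*x2+y1*y2"
  have a1: "x1^2+y1^2 = z1^2-1" "x2^2+y2^2 = z2^2-1" using assms(3,4) by linarith+
  have ii: "(x1*x2+y1*y2)^2 + (x1*y2-y1*x2)^2 = (x1^2+y1^2)*(x2^2+y2^2)" by algebra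
  have cs: "p^2 \<le> (z1^2-1)*(z2^2-1)"
    using ii unfolding a1 p_def[symmetric] using zero_le_power2[of "x1*y2-y1*x2"] by linarith
  have id: "(z1*z2-1)^2 - (z1^2-1)*(z2^2-1) = (z1-z2)^2" by algebra
  have "z1^2 \<ge> 1^2" using assms(3) zero_le_power2[of x1] zero_le_power2[of y1] by simp
  hence z1g: "z1 \<ge> 1" using power2_le_imp_le[of 1 z1] assms(1) by simp
  have "z2^2 \<ge> 1^2" using assms(4) zero_le_power2[of x2] zero_le_power2[of y2] by simp
  hence z2g: "z2 \<ge> 1" using power2_le_imp_le[of 1 z2] assms(2) by simp
  have zz: "z1*z2 \<ge> 1" using mult_mono[OF z1g z2g] z1g by simp
  have sq: "p^2 \<le> (z1*z2-1)^2" using cs id zero_le_power2[of "z1-z2"] by linarith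
  hence "\<bar>p\<bar> \<le> z1*z2-1" using zz by (simp add: power2_le_iff_abs_le)
  thus g: "z1*z2 - x1*x2 - y1*y2 \<ge> 1" unfolding p_def by linarith
  assume eq: "z1*z2 - x1*x2 - y1*y2 = 1"
  hence "p = z1*z2-1" unfolding p_def by linarith
  hence "p^2 = (z1*z2-1)^2" by simp
  hence "(z1-z2)^2 \<le> 0" using cs id by linarith
  hence zeq: "z1 = z2" by simp
  have "(x1-x2)^2 + (y1-y2)^2 = (x1^2+y1^2) + (x2^2+y2^2) - 2*(x1*x2+y1*y2)" by algebra
  also have "\<dots> = (z1^2-1) + (z2^2-1) - 2*(z1*z2-1)" using a1 \<open>p = z1*z2-1\<close> unfolding p_def by simp
  also have "\<dots> = 0" using zeq by (simp add: power2_eq_square)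
  finally have "(x1-x2)^2 + (y1-y2)^2 = 0" .
  hence "x1 = x2" "y1 = y2" by (simp_all add: sum_power2_eq_zero_iff)
  thus "x1 = x2 \<and> y1 = y2 \<and> z1 = z2" using zeq by simp
qed

theorem mainTheorem15:
  fixes m :: "nat \<Rightarrow> real" and q :: "nat \<Rightarrow> real \<Rightarrow> real^3"
    and \<omega> :: real and \<alpha> \<rho> :: "nat \<Rightarrow> real"
  assumes masses: "\<forall>i<3. m i > 0"
    and sol: "is_solution 3 m q"
    and RE: "elliptic_RE 3 q \<omega> \<alpha> \<rho>"
    and omega: "\<omega> \<noteq> 0"
    and rho: "\<forall>i<3. \<rho> i \<ge> 0"
    and equilateral: "\<forall>t. hdist (q 0 t) (q 1 t) = hdist (q 1 t) (q 2 t) \<and>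
                           hdist (q 1 t) (q 2 t) = hdist (q 0 t) (q 2 t)"
  shows "(\<forall>t. (q 0 t)$3 = (q 1 t)$3 \<and> (q 1 t)$3 = (q 2 t)$3) \<and> m 0 = m 1 \<and> m 1 = m 2"
proof -
  obtain v where hv: "\<And>t. (\<forall>i<3. \<forall>j<3. i \<noteq> j \<longrightarrow> q i t \<noteq> q j t) \<and>
        (\<forall>i<3. q i t \<in> H2 \<and> lorentz (q i t) (q i t) = -1 \<and> lorentz (q i t) (v i t) = 0 \<and>
            (q i has_vector_derivative v i t) (at t) \<and>
            (v i has_vector_derivative accel 3 m (\<lambda>k. q k t) (v i t) i) (at t))"
    using sol unfolding is_solution_def by blast
  have qf: "q i t = vector [\<rho> i * cos (\<omega> * t + \<alpha> i), \<rho> i * sin (\<omega> * t + \<alpha> i), sqrt ((\<rho> i)^2 + 1)]"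
    if "i<3" for i t using RE that unfolding elliptic_RE_def by blast
  define x where "x i = \<rho> i * cos (\<alpha> i)" for i
  define y where "y i = \<rho> i * sin (\<alpha> i)" for i
  define z where "z i = sqrt ((\<rho> i)^2 + 1)" for i
  define W where "W = \<omega>^2"
  have Wpos: "W > 0" using omega by (simp add: W_def)
  have q0: "q i 0 = vector [x i, y i, z i]" if "i<3" for i
    using qf[OF that, of 0] by (simp add: x_def y_def z_def)
  have qc: "q i 0 $ 1 = x i" "q i 0 $ 2 = y i" "q i 0 $ 3 = z i" if "i<3" for i
    using q0[OF that] by simp_all
  have q3: "q i t $ 3 = z i" if "i<3" for i t using qf[OF that, of t] by (simp add: z_def)
  have zpos: "z i > 0" for i unfolding z_def by (simp add: add_nonneg_pos)
  have xy: "x i^2 + y i^2 = \<rho> i^2" for i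
  proof -
    have "x i^2 + y i^2 = \<rho> i^2 * ((sin (\<alpha> i))^2 + (cos (\<alpha> i))^2)"
      unfolding x_def y_def power_mult_distrib by (simp only: distrib_left add.commute)
    thus ?thesis by simp
  qed
  have zsq: "z i^2 = x i^2 + y i^2 + 1" for i
    unfolding xy z_def by (simp add: add_nonneg_nonneg)
  have v1: "v i s $ 1 = (-(\<rho> i*\<omega>)) * sin(\<omega> * s + \<alpha> i)" if "i<3" for i s
  proof -
    have d: "((\<lambda>s. q i s $ 1) has_real_derivative v i s $ 1) (at s)"
      using comp_deriv hv that by blast
    have "(\<lambda>s. q i s $ 1) = (\<lambda>s. \<rho> i * cos(\<omega> * s + \<alpha> i))" using qf[OF that] by simp
    hence "v i s $ 1 = -(\<rho> i*\<omega> * sin(\<omega> * s + \<alpha> i))" using DERIV_unique[OF d] deriv_cos by metis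
    thus ?thesis by simp
  qed
  have v2: "v i s $ 2 = (\<rho> i*\<omega>) * cos(\<omega> * s + \<alpha> i)" if "i<3" for i s
  proof -
    have d: "((\<lambda>s. q i s $ 2) has_real_derivative v i s $ 2) (at s)"
      using comp_deriv hv that by blast
    have "(\<lambda>s. q i s $ 2) = (\<lambda>s. \<rho> i * sin(\<omega> * s + \<alpha> i))" using qf[OF that] by simp
    thus ?thesis using DERIV_unique[OF d] deriv_sin by metis
  qed
  have v3: "v i s $ 3 = 0" if "i<3" for i s
  proof -
    have d: "((\<lambda>s. q i s $ 3) has_real_derivative v i s $ 3) (at s)"
      using comp_deriv hv that by blast
    have "(\<lambda>s. q i s $ 3) = (\<lambda>s. sqrt ((\<rho> i)^2 + 1))" using qf[OF that] by simp
    thus ?thesis using DERIV_unique[OF d] DERIV_const by metis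
  qed
  have a1: "accel 3 m (\<lambda>k. q k 0) (v i 0) i $ 1 = - W * x i" if "i<3" for i
  proof -
    have d: "((\<lambda>s. v i s $ 1) has_real_derivative accel 3 m (\<lambda>k. q k 0) (v i 0) i $ 1) (at 0)"
      using comp_deriv hv that by blast
    have "(\<lambda>s. v i s $ 1) = (\<lambda>s. (-(\<rho> i*\<omega>)) * sin(\<omega> * s + \<alpha> i))" using v1[OF that] by simp
    hence "accel 3 m (\<lambda>k. q k 0) (v i 0) i $ 1 = (-(\<rho> i*\<omega>))*\<omega> * cos(\<omega>*0+\<alpha> i)"
      using DERIV_unique[OF d] deriv_sin by metis
    thus ?thesis by (simp add: W_def x_def power2_eq_square)
  qed
  have a2: "accel 3 m (\<lambda>k. q k 0) (v i 0) i $ 2 = - W * y i" if "i<3" for i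
  proof -
    have d: "((\<lambda>s. v i s $ 2) has_real_derivative accel 3 m (\<lambda>k. q k 0) (v i 0) i $ 2) (at 0)"
      using comp_deriv hv that by blast
    have "(\<lambda>s. v i s $ 2) = (\<lambda>s. (\<rho> i*\<omega>) * cos(\<omega> * s + \<alpha> i))" using v2[OF that] by simp
    hence "accel 3 m (\<lambda>k. q k 0) (v i 0) i $ 2 = -((\<rho> i*\<omega>)*\<omega> * sin(\<omega>*0+\<alpha> i))"
      using DERIV_unique[OF d] deriv_cos by metis
    thus ?thesis by (simp add: W_def y_def power2_eq_square)
  qed
  have a3: "accel 3 m (\<lambda>k. q k 0) (v i 0) i $ 3 = 0" if "i<3" for i
  proof -
    have d: "((\<lambda>s. v i s $ 3) has_real_derivative accel 3 m (\<lambda>k. q k 0) (v i 0) i $ 3) (at 0)"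
      using comp_deriv hv that by blast
    have "(\<lambda>s. v i s $ 3) = (\<lambda>s. 0)" using v3[OF that] by simp
    thus ?thesis using DERIV_unique[OF d] DERIV_const by metis
  qed
  have Lv: "lorentz (v i 0) (v i 0) = W * (x i^2 + y i^2)" if "i<3" for i
    unfolding lorentz_def v1[OF that] v2[OF that] v3[OF that]
    by (simp add: W_def x_def y_def power2_eq_square algebra_simps)
  have Lq: "lorentz (q i 0) (q j 0) = x i * x j + y i * y j - z i * z j" if "i<3" "j<3" for i j
    unfolding lorentz_def using qc[OF that(1)] qc[OF that(2)] by simp
  have ge1: "- lorentz (q i 0) (q j 0) \<ge> 1" if "i<3" "j<3" for i j
    unfolding Lq[OF that] using rev_cs(1)[OF zpos zpos zsq zsq, of i j] by simp
  have neq1: "- lorentz (q i 0) (q j 0) \<noteq> 1" if "i<3" "j<3" "i \<noteq> j" for i j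
  proof
    assume "- lorentz (q i 0) (q j 0) = 1"
    hence "x i = x j \<and> y i = y j \<and> z i = z j"
      unfolding Lq[OF that(1,2)] using rev_cs(2)[OF zpos zpos zsq zsq, of i j] by simp
    hence "q i 0 = q j 0" using q0[OF that(1)] q0[OF that(2)] by simp
    thus False using hv[of 0] that by blast
  qed
  define c where "c = lorentz (q 0 0) (q 1 0)"
  have hd: "arcosh (- lorentz (q 0 0) (q 1 0)) = arcosh (- lorentz (q 1 0) (q 2 0))"
           "arcosh (- lorentz (q 1 0) (q 2 0)) = arcosh (- lorentz (q 0 0) (q 2 0))"
    using equilateral[rule_format, of 0] unfolding hdist_def by auto
  have g01: "1 \<le> - lorentz (q 0 0) (q 1 0)" by (rule ge1) simp_all
  have g12: "1 \<le> - lorentz (q 1 0) (q 2 0)" by (rule ge1) simp_all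
  have g02: "1 \<le> - lorentz (q 0 0) (q 2 0)" by (rule ge1) simp_all
  have "- lorentz (q 0 0) (q 1 0) = - lorentz (q 1 0) (q 2 0)"
    using arg_cong[OF hd(1), of cosh] unfolding cosh_arcosh_real[OF g01] cosh_arcosh_real[OF g12] .
  hence L12: "lorentz (q 1 0) (q 2 0) = c" unfolding c_def by simp
  have "- lorentz (q 1 0) (q 2 0) = - lorentz (q 0 0) (q 2 0)"
    using arg_cong[OF hd(2), of cosh] unfolding cosh_arcosh_real[OF g02] cosh_arcosh_real[OF g12] .
  hence L02: "lorentz (q 0 0) (q 2 0) = c" using L12 by simp
  have sym: "lorentz a b = lorentz b a" for a b unfolding lorentz_def by (simp add: mult.commute)
  have L01: "lorentz (q 0 0) (q 1 0) = c" by (simp add: c_def)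
  have L10: "lorentz (q 1 0) (q 0 0) = c" using L01 sym by metis
  have L21: "lorentz (q 2 0) (q 1 0) = c" using L12 sym by metis
  have L20: "lorentz (q 2 0) (q 0 0) = c" using L02 sym by metis
  have cneg: "c < -1" using ge1[of 0 1] neq1[of 0 1] unfolding c_def by simp
  define D where "D = (c^2 - 1) powr (3/2)"
  have "c^2 > 1"
  proof -
    have "1 < -c" using cneg by simp
    hence "1 * 1 < (-c) * (-c)" by (intro mult_strict_mono) auto
    thus ?thesis by (simp add: power2_eq_square)
  qed
  hence Dpos: "D > 0" unfolding D_def by simp
  define K where "K i = m i / D" for i
  have Kpos: "K i > 0" if "i<3" for i using masses that Dpos by (simp add: K_def)
  have Lv0: "lorentz (v 0 0) (v 0 0) = W * (x 0^2 + y 0^2)" by (rule Lv) simp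
  have "accel 3 m (\<lambda>k. q k 0) (v 0 0) 0 =
    (m 1 / ((lorentz (q 0 0) (q 1 0))^2 - 1) powr (3/2)) *\<^sub>R (q 1 0 + lorentz (q 0 0) (q 1 0) *\<^sub>R q 0 0)
  + (m 2 / ((lorentz (q 0 0) (q 2 0))^2 - 1) powr (3/2)) *\<^sub>R (q 2 0 + lorentz (q 0 0) (q 2 0) *\<^sub>R q 0 0)
  + lorentz (v 0 0) (v 0 0) *\<^sub>R q 0 0" by (rule accel3) simp_all
  hence A0: "accel 3 m (\<lambda>k. q k 0) (v 0 0) 0 = K 1 *\<^sub>R (q 1 0 + c *\<^sub>R q 0 0) + K 2 *\<^sub>R (q 2 0 + c *\<^sub>R q 0 0)
      + (W * (x 0^2 + y 0^2)) *\<^sub>R q 0 0"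
    unfolding L01 L02 Lv0 K_def D_def by simp
  have Lv1: "lorentz (v 1 0) (v 1 0) = W * (x 1^2 + y 1^2)" by (rule Lv) simp
  have "accel 3 m (\<lambda>k. q k 0) (v 1 0) 1 =
    (m 0 / ((lorentz (q 1 0) (q 0 0))^2 - 1) powr (3/2)) *\<^sub>R (q 0 0 + lorentz (q 1 0) (q 0 0) *\<^sub>R q 1 0)
  + (m 2 / ((lorentz (q 1 0) (q 2 0))^2 - 1) powr (3/2)) *\<^sub>R (q 2 0 + lorentz (q 1 0) (q 2 0) *\<^sub>R q 1 0)
  + lorentz (v 1 0) (v 1 0) *\<^sub>R q 1 0" by (rule accel3) simp_all
  hence A1: "accel 3 m (\<lambda>k. q k 0) (v 1 0) 1 = K 0 *\<^sub>R (q 0 0 + c *\<^sub>R q 1 0) + K 2 *\<^sub>R (q 2 0 + c *\<^sub>R q 1 0)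
      + (W * (x 1^2 + y 1^2)) *\<^sub>R q 1 0"
    unfolding L10 L12 Lv1 K_def D_def by simp
  have Lv2: "lorentz (v 2 0) (v 2 0) = W * (x 2^2 + y 2^2)" by (rule Lv) simp
  have "accel 3 m (\<lambda>k. q k 0) (v 2 0) 2 =
    (m 0 / ((lorentz (q 2 0) (q 0 0))^2 - 1) powr (3/2)) *\<^sub>R (q 0 0 + lorentz (q 2 0) (q 0 0) *\<^sub>R q 2 0)
  + (m 1 / ((lorentz (q 2 0) (q 1 0))^2 - 1) powr (3/2)) *\<^sub>R (q 1 0 + lorentz (q 2 0) (q 1 0) *\<^sub>R q 2 0)
  + lorentz (v 2 0) (v 2 0) *\<^sub>R q 2 0" by (rule accel3) simp_all
  hence A2: "accel 3 m (\<lambda>k. q k 0) (v 2 0) 2 = K 0 *\<^sub>R (q 0 0 + c *\<^sub>R q 2 0) + K 1 *\<^sub>R (q 1 0 + c *\<^sub>R q 2 0)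
      + (W * (x 2^2 + y 2^2)) *\<^sub>R q 2 0"
    unfolding L20 L21 Lv2 K_def D_def by simp
  have E0x: "K 1*(x 1 + c*x 0) + K 2*(x 2 + c*x 0) + W*(x 0^2+y 0^2)*x 0 = - W*x 0"
    using a1[of 0] unfolding A0 by (simp add: qc)
  have E0y: "K 1*(y 1 + c*y 0) + K 2*(y 2 + c*y 0) + W*(x 0^2+y 0^2)*y 0 = - W*y 0"
    using a2[of 0] unfolding A0 by (simp add: qc)
  have E0z: "K 1*(z 1 + c*z 0) + K 2*(z 2 + c*z 0) + W*(x 0^2+y 0^2)*z 0 = 0"
    using a3[of 0] unfolding A0 by (simp add: qc)
  have E1x: "K 0*(x 0 + c*x 1) + K 2*(x 2 + c*x 1) + W*(x 1^2+y 1^2)*x 1 = - W*x 1"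
    using a1[of 1] unfolding A1 by (simp add: qc)
  have E1y: "K 0*(y 0 + c*y 1) + K 2*(y 2 + c*y 1) + W*(x 1^2+y 1^2)*y 1 = - W*y 1"
    using a2[of 1] unfolding A1 by (simp add: qc)
  have E1z: "K 0*(z 0 + c*z 1) + K 2*(z 2 + c*z 1) + W*(x 1^2+y 1^2)*z 1 = 0"
    using a3[of 1] unfolding A1 by (simp add: qc)
  have E2x: "K 0*(x 0 + c*x 2) + K 1*(x 1 + c*x 2) + W*(x 2^2+y 2^2)*x 2 = - W*x 2"
    using a1[of 2] unfolding A2 by (simp add: qc)
  have E2y: "K 0*(y 0 + c*y 2) + K 1*(y 1 + c*y 2) + W*(x 2^2+y 2^2)*y 2 = - W*y 2"
    using a2[of 2] unfolding A2 by (simp add: qc)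
  have E2z: "K 0*(z 0 + c*z 2) + K 1*(z 1 + c*z 2) + W*(x 2^2+y 2^2)*z 2 = 0"
    using a3[of 2] unfolding A2 by (simp add: qc)
  have c01: "c = x 0*x 1 + y 0*y 1 - z 0 * z 1" using L01 Lq[of 0 1] by simp
  have c12: "c = x 1*x 2 + y 1*y 2 - z 1 * z 2" using L12 Lq[of 1 2] by simp
  have c02: "c = x 0*x 2 + y 0*y 2 - z 0 * z 2" using L02 Lq[of 0 2] by simp
  have res: "z 0 = z 1 \<and> z 1 = z 2 \<and> K 0 = K 1 \<and> K 1 = K 2"
    by (rule alg[OF zpos zsq c01 c12 c02 cneg Kpos Wpos E0x E0y E0z E1x E1y E1z E2x E2y E2z])
  have "m i = K i * D" for i using Dpos by (simp add: K_def)
  hence "m 0 = m 1 \<and> m 1 = m 2" using res by simp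
  moreover have "\<forall>t. (q 0 t)$3 = (q 1 t)$3 \<and> (q 1 t)$3 = (q 2 t)$3" using res q3 by simp
  ultimately show ?thesis by blast
qed

end
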